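(* There exists an NWBTS$(5;b)$ for every $b\ge 0$ with $b\equiv 3,4,6,7\pmod{10}$, and an NWBTS$(11;b)$ for every $b\ge0$ with $b\equiv 18,19,36,37\pmod{55}$.
   Context: A triple system TS$(v;b)$ is a pair $(V,\mathcal F)$, $V$ a set of $v\ge3$ points, $\mathcal F$ a multiset of $b$ 3-subsets (blocks). $\lambda_{x_1,\dots,x_j}$ is the number of blocks containing $\{x_1,\dots,x_j\}$; $j$-balanced means $|\lambda_{x_1,\dots,x_j}-\lambda_{y_1,\dots,y_j}|\le1$ for all $j$-subsets. Associated pair $(\lambda,\varepsilon)$ of $(v,b)$: integers with $3b=\lambda\binom v2+\varepsilon$, $-v/2<\varepsilon<v/2$. (C1): $v\equiv 2\pmod 3$ and $b\in\{\lfloor \lambda v(v-1)/6\rfloor,\lceil \lambda v(v-1)/6\rceil\}$ for an integer $\lambda$ with $\lambda\equiv1,2\pmod 3$ if $v\equiv5\pmod6$ and $\lambda\equiv 2,4\pmod 6$ if $v\equiv2\pmod 6$ ($\lambda$ is that of the associated pair; $\varepsilon\in\{\pm1,\pm2\}$). Defect graph (when all $\lambda_{x,y}\in\{\lambda-1,\lambda,\lambda+1\}$): graph on $V$ with edges the pairs with $\lambda_{x,y}=\lambda+1$ (label $+1$) or $\lambda-1$ (label $-1$); isomorphisms preserve labels. $G_1$: triangle, two $+1$ edges and one $-1$; $G_{-1}$: triangle, one $+1$ and two $-1$; $G_2$: 4-cycle, three $+1$ and one $-1$; $G_{-2}$: 4-cycle, one $+1$ and three $-1$. Under (C1), an NWBTS$(v;b)$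 is a 3-balanced TS$(v;b)$ with all $\lambda_{x,y}\in\{\lambda-1,\lambda,\lambda+1\}$ and defect graph isomorphic to $G_\varepsilon$. (The values of $b$ listed are exactly those for which $(5,b)$, resp. $(11,b)$, satisfies (C1).) *)

theory Defs
  imports Complex_Main "HOL-Library.Multiset"
begin

definition TS :: "nat \<Rightarrow> nat \<Rightarrow> 'a set \<Rightarrow> 'a set multiset \<Rightarrow> bool" where
  "TS v b V F \<longleftrightarrow> finite V \<and> card V = v \<and> v \<ge> 3 \<and> size F = b \<and>
     (\<forall>B\<in>#F. B \<subseteq> V \<and> card B = 3)"

definition lam :: "'a set multiset \<Rightarrow> 'a set \<Rightarrow> nat" where
  "lam F S = size (filter_mset (\<lambda>B. S \<subseteq> B) F)"

definition balanced :: "nat \<Rightarrow> 'a set \<Rightarrow> 'a set multiset \<Rightarrow> bool" where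
  "balanced j V F \<longleftrightarrow> (\<forall>S T. S \<subseteq> V \<and> T \<subseteq> V \<and> card S = j \<and> card T = j \<longrightarrow>
      \<bar>int (lam F S) - int (lam F T)\<bar> \<le> 1)"

definition assoc_pair :: "nat \<Rightarrow> nat \<Rightarrow> int \<Rightarrow> int \<Rightarrow> bool" where
  "assoc_pair v b l e \<longleftrightarrow> int (3 * b) = l * int (v choose 2) + e \<and>
     - int v < 2 * e \<and> 2 * e < int v"

definition C1 :: "nat \<Rightarrow> nat \<Rightarrow> bool" where
  "C1 v b \<longleftrightarrow> v mod 3 = 2 \<and>
     (\<exists>l e. assoc_pair v b l e \<and> e \<in> {-2,-1,1,2} \<and>
        (v mod 6 = 5 \<longrightarrow> l mod 3 \<in> {1,2}) \<and>
        (v mod 6 = 2 \<longrightarrow> l mod 6 \<in> {2,4}) \<and>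
        (int b = \<lfloor>real_of_int l * real v * (real v - 1) / 6\<rfloor> \<or>
         int b = \<lceil>real_of_int l * real v * (real v - 1) / 6\<rceil>))"

text \<open>Labelled graphs G_eps on vertex set G_verts eps with edge labels in {-1,0,1}
  (0 = non-edge).\<close>
definition G_verts :: "int \<Rightarrow> nat set" where
  "G_verts e = (if \<bar>e\<bar> = 1 then {0,1,2} else {0,1,2,3})"

definition G_label :: "int \<Rightarrow> nat \<Rightarrow> nat \<Rightarrow> int" where
  "G_label e x y =
     (if \<bar>e\<bar> = 1 then
        sgn e * (if {x,y} = {0,1} \<or> {x,y} = {0,2} then 1
                 else if {x,y} = {1,2} then -1 else 0)
      else
        sgn e * (if {x,y} = {0,1} \<or> {x,y} = {1,2} \<or> {x,y} = {2,3} then 1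
                 else if {x,y} = {3,0} then -1 else 0))"

text \<open>Defect graph of (V,F) w.r.t. lambda l: label of pair xy is lambda_xy - l
  (edges are the pairs with nonzero label). It is isomorphic (as a labelled graph,
  up to isolated vertices) to G_e if some injection of G_verts e into V carries the
  labels of G_e to the defect labels and every defect edge lies in the image.\<close>
definition defect_iso :: "'a set \<Rightarrow> 'a set multiset \<Rightarrow> int \<Rightarrow> int \<Rightarrow> bool" where
  "defect_iso V F l e \<longleftrightarrow> (\<exists>f. inj_on f (G_verts e) \<and> f ` G_verts e \<subseteq> V \<and>
      (\<forall>x\<in>G_verts e. \<forall>y\<in>G_verts e. x \<noteq> y \<longrightarrow>
          int (lam F {f x, f y}) - l = G_label e x y) \<and>
      (\<forall>x\<in>V. \<forall>y\<in>V. x \<noteq> y \<and> int (lam F {x, y}) \<noteq> l \<longrightarrow>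
          x \<in> f ` G_verts e \<and> y \<in> f ` G_verts e))"

definition NWBTS :: "nat \<Rightarrow> nat \<Rightarrow> 'a set \<Rightarrow> 'a set multiset \<Rightarrow> bool" where
  "NWBTS v b V F \<longleftrightarrow> C1 v b \<and> TS v b V F \<and> balanced 3 V F \<and>
     (\<exists>l e. assoc_pair v b l e \<and>
        (\<forall>x\<in>V. \<forall>y\<in>V. x \<noteq> y \<longrightarrow> \<bar>int (lam F {x, y}) - l\<bar> \<le> 1) \<and>
        defect_iso V F l e)"

end

theory Submission
  imports Defs
begin

fun tri :: "nat \<times> nat \<times> nat \<Rightarrow> nat set" where
  "tri (a,b,c) = {a,b,c}"
fun inT :: "nat \<Rightarrow> nat \<times> nat \<times> nat \<Rightarrow> bool" where
  "inT x (a,b,c) = (x = a \<or> x = b \<or> x = c)"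
definition cnt :: "(nat \<times> nat \<times> nat) list \<Rightarrow> nat \<Rightarrow> nat \<Rightarrow> nat" where
  "cnt s x y = length (filter (\<lambda>t. inT x t \<and> inT y t) s)"
fun sortd :: "nat \<Rightarrow> nat \<times> nat \<times> nat \<Rightarrow> bool" where
  "sortd v (a,b,c) = (a < b \<and> b < c \<and> c < v)"
definition okS :: "nat \<Rightarrow> (nat \<times> nat \<times> nat) list \<Rightarrow> bool" where
  "okS v s = (list_all (sortd v) s \<and> distinct s)"
definition okP :: "nat \<Rightarrow> (nat \<times> nat \<times> nat) list \<Rightarrow> int \<Rightarrow> int \<Rightarrow> bool" where
  "okP v s lz e = list_all (\<lambda>x. list_all (\<lambda>y. x = y \<or> int (cnt s x y) = lz + G_label e x y) [0..<v]) [0..<v]"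

lemma okP_D: "okP v s lz e \<Longrightarrow> x < v \<Longrightarrow> y < v \<Longrightarrow> x \<noteq> y \<Longrightarrow> int (cnt s x y) = lz + G_label e x y"
proof -
  assume h: "okP v s lz e" "x < v" "y < v" "x \<noteq> y"
  then have "\<forall>x\<in>{0..<v}. \<forall>y\<in>{0..<v}. x = y \<or> int (cnt s x y) = lz + G_label e x y"
    by (simp add: okP_def list_all_iff)
  then show ?thesis using h by (meson atLeastLessThan_iff zero_le)
qed

lemma size_filter_map: "size (filter_mset P (image_mset f (mset xs))) = length (filter (\<lambda>t. P (f t)) xs)"
  by (induction xs) auto

lemma in_repeat: "B \<in># repeat_mset q M \<Longrightarrow> B \<in># M"
  by (metis count_repeat_mset count_eq_zero_iff mult_zero_right)

lemma inT_tri: "inT x t = (x \<in> tri t)"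
  by (cases t) auto

lemma tri_card: "sortd v t \<Longrightarrow> card (tri t) = 3 \<and> tri t \<subseteq> {0..<v}"
  by (cases t) auto

lemma tri_inj: "inj_on tri {t. sortd v t}"
proof (rule inj_onI)
  fix t u assume "t \<in> {t. sortd v t}" "u \<in> {t. sortd v t}" "tri t = tri u"
  then show "t = u"
    apply (cases t; cases u)
    apply (auto simp: insert_eq_iff)
    by (metis insertCI insertE less_irrefl order_less_trans singletonD)+
qed

lemma filter_repeat: "filter_mset P (repeat_mset n M) = repeat_mset n (filter_mset P M)"
  by (rule multiset_eqI) simp

definition Allt :: "nat \<Rightarrow> nat set set" where
  "Allt v = {B. B \<subseteq> {0..<v} \<and> card B = 3}"

definition theF :: "nat \<Rightarrow> nat \<Rightarrow> (nat \<times> nat \<times> nat) list \<Rightarrow> nat set multiset" where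
  "theF v q s = repeat_mset q (mset_set (Allt v)) + mset (map tri s)"

lemma Allt_fin: "finite (Allt v)"
  unfolding Allt_def by (rule finite_subset[of _ "Pow {0..<v}"]) auto

lemma lam_theF: "lam (theF v q s) S = q * card {B \<in> Allt v. S \<subseteq> B} + length (filter (\<lambda>t. S \<subseteq> tri t) s)"
  unfolding lam_def theF_def
  by (simp add: filter_repeat Allt_fin filter_mset_mset_set size_filter_map)

lemma pair_card:
  assumes "finite V" "x \<in> V" "y \<in> V" "x \<noteq> y"
  shows "card {B. B \<subseteq> V \<and> card B = 3 \<and> {x,y} \<subseteq> B} = card V - 2"
proof -
  have eq: "{B. B \<subseteq> V \<and> card B = 3 \<and> {x,y} \<subseteq> B} = (\<lambda>z. {x,y,z}) ` (V - {x,y})"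
  proof
    show "(\<lambda>z. {x,y,z}) ` (V - {x,y}) \<subseteq> {B. B \<subseteq> V \<and> card B = 3 \<and> {x,y} \<subseteq> B}"
      using assms by auto
    show "{B. B \<subseteq> V \<and> card B = 3 \<and> {x,y} \<subseteq> B} \<subseteq> (\<lambda>z. {x,y,z}) ` (V - {x,y})"
    proof
      fix B assume B: "B \<in> {B. B \<subseteq> V \<and> card B = 3 \<and> {x,y} \<subseteq> B}"
      then have fB: "finite B" using assms finite_subset by blast
      have "card (B - {x,y}) = 1" using B assms fB by (simp add: card_Diff_subset)
      then obtain z where z: "B - {x,y} = {z}" by (meson card_1_singletonE)
      then have "B = {x,y,z}" using B by auto
      moreover have "z \<in> V - {x,y}" using z B by auto
      ultimately show "B \<in> (\<lambda>z. {x,y,z}) ` (V - {x,y})" by blast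
    qed
  qed
  have inj: "inj_on (\<lambda>z. {x,y,z}) (V - {x,y})"
    by (rule inj_onI) (auto simp: insert_eq_iff)
  show ?thesis unfolding eq using card_image[OF inj] assms
    by (simp add: card_Diff_subset)
qed

lemma triple_card:
  assumes "T \<subseteq> {0..<v}" "card T = 3"
  shows "card {B \<in> Allt v. T \<subseteq> B} = 1"
proof -
  have fT: "finite T" using assms(1) finite_subset by blast
  have "{B \<in> Allt v. T \<subseteq> B} = {T}"
  proof
    show "{B \<in> Allt v. T \<subseteq> B} \<subseteq> {T}"
    proof
      fix B assume "B \<in> {B \<in> Allt v. T \<subseteq> B}"
      then have "T \<subseteq> B" "card B = 3" "finite B" by (auto simp: Allt_def intro: finite_subset)
      then have "T = B" using assms card_subset_eq by metis
      then show "B \<in> {T}" by simp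
    qed
  qed (use assms in \<open>auto simp: Allt_def\<close>)
  then show ?thesis by simp
qed

lemma triple_s:
  assumes "okS v s" "card T = 3"
  shows "length (filter (\<lambda>t. T \<subseteq> tri t) s) \<le> 1"
proof -
  have st: "\<forall>t\<in>set s. sortd v t" using assms(1) by (simp add: okS_def list_all_iff)
  have "filter (\<lambda>t. T \<subseteq> tri t) s = filter (\<lambda>t. tri t = T) s"
  proof (rule filter_cong[OF refl])
    fix t assume "t \<in> set s"
    then have "card (tri t) = 3" using st tri_card by blast
    then show "(T \<subseteq> tri t) = (tri t = T)" using assms(2)
      by (metis card_ge_0_finite card_subset_eq order_refl zero_less_numeral)
  qed
  moreover have "distinct (filter (\<lambda>t. tri t = T) s)" using assms(1) by (simp add: okS_def)
  moreover have "inj_on tri (set (filter (\<lambda>t. tri t = T) s))"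
    using st by (intro inj_on_subset[OF tri_inj[of v]]) auto
  moreover have "tri ` set (filter (\<lambda>t. tri t = T) s) \<subseteq> {T}" by auto
  ultimately show ?thesis
    by (metis card_image card_mono distinct_card finite.emptyI finite.insertI is_singletonI
        is_singleton_altdef)
qed

lemma pair_s: "length (filter (\<lambda>t. {x,y} \<subseteq> tri t) s) = cnt s x y"
  unfolding cnt_def by (simp add: inT_tri)

lemma pair_s2: "length (filter (\<lambda>t. x \<in> tri t \<and> y \<in> tri t) s) = cnt s x y"
  unfolding cnt_def by (simp add: inT_tri)

lemma G_label_bound: "e \<in> {-2,-1,1,2} \<Longrightarrow> \<bar>G_label e x y\<bar> \<le> 1"
  by (auto simp: G_label_def)

lemma G_label_supp: "e \<in> {-2,-1,1,2} \<Longrightarrow> G_label e x y \<noteq> 0 \<Longrightarrow> x \<in> G_verts e \<and> y \<in> G_verts e"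
  by (auto simp: G_label_def G_verts_def doubleton_eq_iff split: if_splits)

lemma generic:
  assumes S: "okS v s" and P: "okP v s lz e" and v: "v \<ge> 4"
    and e: "e \<in> {-2,-1,1,2}" and C: "C1 v b" and b: "b = q * (v choose 3) + length s"
    and A: "assoc_pair v b (int (q*(v-2)) + lz) e"
  shows "NWBTS v b {0..<v} (theF v q s)"
proof -
  let ?V = "{0..<v}" and ?F = "theF v q s" and ?l = "int (q*(v-2)) + lz"
  have st: "\<forall>t\<in>set s. sortd v t" using S by (simp add: okS_def list_all_iff)
  have TS: "TS v b ?V ?F"
    unfolding TS_def
  proof (intro conjI)
    show "size ?F = b" using b by (simp add: theF_def Allt_fin Allt_def n_subsets)
    show "\<forall>B\<in>#?F. B \<subseteq> ?V \<and> card B = 3"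
    proof
      fix B assume "B \<in># ?F"
      then consider "B \<in># mset_set (Allt v)" | "B \<in> tri ` set s"
      proof -
        assume c1: "B \<in># mset_set (Allt v) \<Longrightarrow> thesis" and c2: "B \<in> tri ` set s \<Longrightarrow> thesis"
        have "B \<in># repeat_mset q (mset_set (Allt v)) \<or> B \<in># mset (map tri s)"
          using \<open>B \<in># ?F\<close> unfolding theF_def by simp
        then show thesis
        proof
          assume "B \<in># repeat_mset q (mset_set (Allt v))"
          then show thesis by (rule c1[OF in_repeat])
        next
          assume "B \<in># mset (map tri s)"
          then show thesis using c2 by simp
        qed
      qed
      then show "B \<subseteq> ?V \<and> card B = 3"
      proof cases
        case 1 then show ?thesis using Allt_fin by (simp add: Allt_def)
      next
        case 2 then show ?thesis using st tri_card by blast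
      qed
    qed
  qed (use v in auto)
  have bal: "balanced 3 ?V ?F"
    unfolding balanced_def
  proof (intro allI impI)
    fix S T assume h: "S \<subseteq> ?V \<and> T \<subseteq> ?V \<and> card S = 3 \<and> card T = 3"
    have "q \<le> lam ?F S \<and> lam ?F S \<le> q+1" "q \<le> lam ?F T \<and> lam ?F T \<le> q+1"
      using h triple_card[of S v] triple_card[of T v] triple_s[OF S, of S] triple_s[OF S, of T]
      by (auto simp: lam_theF)
    then show "\<bar>int (lam ?F S) - int (lam ?F T)\<bar> \<le> 1" by linarith
  qed
  have pairs: "int (lam ?F {x,y}) - ?l = G_label e x y" if "x \<in> ?V" "y \<in> ?V" "x \<noteq> y" for x y
  proof -
    have "card {B \<in> Allt v. {x,y} \<subseteq> B} = v - 2"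
      using pair_card[of ?V x y] that by (simp add: Allt_def conj_assoc)
    then show ?thesis using okP_D[OF P, of x y] that by (simp add: lam_theF pair_s2)
  qed
  have Gv: "G_verts e \<subseteq> ?V" using v by (auto simp: G_verts_def)
  have iso: "defect_iso ?V ?F ?l e"
    unfolding defect_iso_def
  proof (intro exI[of _ id] conjI ballI impI)
    show "inj_on id (G_verts e)" by simp
    show "id ` G_verts e \<subseteq> ?V" using Gv by simp
  next
    fix x y assume "x \<in> G_verts e" "y \<in> G_verts e" "x \<noteq> y"
    then have "x \<in> ?V" "y \<in> ?V" using Gv by auto
    then show "int (lam ?F {id x, id y}) - ?l = G_label e x y" unfolding id_apply by (rule pairs) fact+
  next
    fix x y assume h: "x \<in> ?V" "y \<in> ?V" "x \<noteq> y \<and> int (lam ?F {x, y}) \<noteq> ?l"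
    then have "G_label e x y \<noteq> 0" using pairs[of x y] by linarith
    then show "x \<in> id ` G_verts e" "y \<in> id ` G_verts e" using G_label_supp[OF e] by auto
  qed
  have dev: "\<forall>x\<in>?V. \<forall>y\<in>?V. x \<noteq> y \<longrightarrow> \<bar>int (lam ?F {x, y}) - ?l\<bar> \<le> 1"
  proof (intro ballI impI)
    fix x y assume "x \<in> ?V" "y \<in> ?V" "x \<noteq> y"
    then show "\<bar>int (lam ?F {x, y}) - ?l\<bar> \<le> 1" using pairs[of x y] G_label_bound[OF e] by simp
  qed
  show ?thesis unfolding NWBTS_def using C TS bal A iso dev by blast
qed


lemma C1I:
  assumes "v mod 3 = 2" "v mod 6 = 5" "assoc_pair v b l e" "e \<in> {-2,-1,1,2}" "l mod 3 \<in> {1,2}"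
    "int b = \<lfloor>real_of_int l * real v * (real v - 1) / 6\<rfloor> \<or> int b = \<lceil>real_of_int l * real v * (real v - 1) / 6\<rceil>"
  shows "C1 v b"
  unfolding C1_def using assms by auto

lemma ch5: "(5::nat) choose 2 = 10" "(5::nat) choose 3 = 10"
  by (simp_all add: numeral_eq_Suc)
lemma ch11: "(11::nat) choose 2 = 55" "(11::nat) choose 3 = 165"
  by (simp_all add: numeral_eq_Suc)

definition s5_3 :: "(nat \<times> nat \<times> nat) list" where
  "s5_3 = [(0,3,4), (1,2,3), (1,2,4)]"

lemma okS_s5_3: "okS 5 s5_3" unfolding s5_3_def by code_simp
lemma okP_s5_3: "okP 5 s5_3 1 (-1)" unfolding s5_3_def by code_simp
lemma len_s5_3: "length s5_3 = 3" unfolding s5_3_def by simp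

lemma inst_s5_3: "NWBTS 5 (10*q + 3) {0..<5} (theF 5 q s5_3)"
proof (rule generic[where lz="1" and e="(-1)"])
  show "okS 5 s5_3" by (rule okS_s5_3)
  show "okP 5 s5_3 (1) ((-1))" by (rule okP_s5_3)
  show "(4::nat) \<le> 5" by simp
  show "((-1)::int) \<in> {-2,-1,1,2}" by simp
  show "10*q + 3 = q * (5 choose 3) + length s5_3" by (simp add: ch5 len_s5_3)
  have A: "assoc_pair 5 (10*q + 3) (int (q*(5-2)) + 1) ((-1))"
    unfolding assoc_pair_def by (simp add: ch5)
  then show "assoc_pair 5 (10*q + 3) (int (q*(5-2)) + 1) ((-1))" .
  have X: "real_of_int (int (q*(5-2)) + 1) * real (5::nat) * (real (5::nat) - 1) / 6 = real (10*q + 3) + 1/3"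
    by (simp add: algebra_simps)
  have F: "int (10*q + 3) = \<lfloor> real (10*q + 3) + 1/3 \<rfloor>"
    by (rule floor_unique[symmetric]) simp_all
  show "C1 5 (10*q + 3)"
  proof (rule C1I[OF _ _ A])
    show "(int (q*(5-2)) + 1) mod 3 \<in> {1,2}" by (simp; presburger)
    show "int (10*q + 3) = \<lfloor>real_of_int (int (q*(5-2)) + 1) * real (5::nat) * (real (5::nat) - 1) / 6\<rfloor> \<or> int (10*q + 3) = \<lceil>real_of_int (int (q*(5-2)) + 1) * real (5::nat) * (real (5::nat) - 1) / 6\<rceil>"
      unfolding X using F by blast
  qed simp_all
qed

definition s5_4 :: "(nat \<times> nat \<times> nat) list" where
  "s5_4 = [(0,1,2), (0,1,4), (1,2,3), (2,3,4)]"

lemma okS_s5_4: "okS 5 s5_4" unfolding s5_4_def by code_simp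
lemma okP_s5_4: "okP 5 s5_4 1 2" unfolding s5_4_def by code_simp
lemma len_s5_4: "length s5_4 = 4" unfolding s5_4_def by simp

lemma inst_s5_4: "NWBTS 5 (10*q + 4) {0..<5} (theF 5 q s5_4)"
proof (rule generic[where lz="1" and e="2"])
  show "okS 5 s5_4" by (rule okS_s5_4)
  show "okP 5 s5_4 (1) (2)" by (rule okP_s5_4)
  show "(4::nat) \<le> 5" by simp
  show "(2::int) \<in> {-2,-1,1,2}" by simp
  show "10*q + 4 = q * (5 choose 3) + length s5_4" by (simp add: ch5 len_s5_4)
  have A: "assoc_pair 5 (10*q + 4) (int (q*(5-2)) + 1) (2)"
    unfolding assoc_pair_def by (simp add: ch5)
  then show "assoc_pair 5 (10*q + 4) (int (q*(5-2)) + 1) (2)" .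
  have X: "real_of_int (int (q*(5-2)) + 1) * real (5::nat) * (real (5::nat) - 1) / 6 = real (10*q + 4) - 2/3"
    by (simp add: algebra_simps)
  have F: "int (10*q + 4) = \<lceil> real (10*q + 4) - 2/3 \<rceil>"
    by (rule ceiling_unique[symmetric]) simp_all
  show "C1 5 (10*q + 4)"
  proof (rule C1I[OF _ _ A])
    show "(int (q*(5-2)) + 1) mod 3 \<in> {1,2}" by (simp; presburger)
    show "int (10*q + 4) = \<lfloor>real_of_int (int (q*(5-2)) + 1) * real (5::nat) * (real (5::nat) - 1) / 6\<rfloor> \<or> int (10*q + 4) = \<lceil>real_of_int (int (q*(5-2)) + 1) * real (5::nat) * (real (5::nat) - 1) / 6\<rceil>"
      unfolding X using F by blast
  qed simp_all
qed

definition s5_6 :: "(nat \<times> nat \<times> nat) list" where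
  "s5_6 = [(0,1,3), (0,2,3), (0,2,4), (0,3,4), (1,2,4), (1,3,4)]"

lemma okS_s5_6: "okS 5 s5_6" unfolding s5_6_def by code_simp
lemma okP_s5_6: "okP 5 s5_6 2 (-2)" unfolding s5_6_def by code_simp
lemma len_s5_6: "length s5_6 = 6" unfolding s5_6_def by simp

lemma inst_s5_6: "NWBTS 5 (10*q + 6) {0..<5} (theF 5 q s5_6)"
proof (rule generic[where lz="2" and e="(-2)"])
  show "okS 5 s5_6" by (rule okS_s5_6)
  show "okP 5 s5_6 (2) ((-2))" by (rule okP_s5_6)
  show "(4::nat) \<le> 5" by simp
  show "((-2)::int) \<in> {-2,-1,1,2}" by simp
  show "10*q + 6 = q * (5 choose 3) + length s5_6" by (simp add: ch5 len_s5_6)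
  have A: "assoc_pair 5 (10*q + 6) (int (q*(5-2)) + 2) ((-2))"
    unfolding assoc_pair_def by (simp add: ch5)
  then show "assoc_pair 5 (10*q + 6) (int (q*(5-2)) + 2) ((-2))" .
  have X: "real_of_int (int (q*(5-2)) + 2) * real (5::nat) * (real (5::nat) - 1) / 6 = real (10*q + 6) + 2/3"
    by (simp add: algebra_simps)
  have F: "int (10*q + 6) = \<lfloor> real (10*q + 6) + 2/3 \<rfloor>"
    by (rule floor_unique[symmetric]) simp_all
  show "C1 5 (10*q + 6)"
  proof (rule C1I[OF _ _ A])
    show "(int (q*(5-2)) + 2) mod 3 \<in> {1,2}" by (simp; presburger)
    show "int (10*q + 6) = \<lfloor>real_of_int (int (q*(5-2)) + 2) * real (5::nat) * (real (5::nat) - 1) / 6\<rfloor> \<or> int (10*q + 6) = \<lceil>real_of_int (int (q*(5-2)) + 2) * real (5::nat) * (real (5::nat) - 1) / 6\<rceil>"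
      unfolding X using F by blast
  qed simp_all
qed

definition s5_7 :: "(nat \<times> nat \<times> nat) list" where
  "s5_7 = [(0,1,2), (0,1,3), (0,1,4), (0,2,3), (0,2,4), (1,3,4), (2,3,4)]"

lemma okS_s5_7: "okS 5 s5_7" unfolding s5_7_def by code_simp
lemma okP_s5_7: "okP 5 s5_7 2 1" unfolding s5_7_def by code_simp
lemma len_s5_7: "length s5_7 = 7" unfolding s5_7_def by simp

lemma inst_s5_7: "NWBTS 5 (10*q + 7) {0..<5} (theF 5 q s5_7)"
proof (rule generic[where lz="2" and e="1"])
  show "okS 5 s5_7" by (rule okS_s5_7)
  show "okP 5 s5_7 (2) (1)" by (rule okP_s5_7)
  show "(4::nat) \<le> 5" by simp
  show "(1::int) \<in> {-2,-1,1,2}" by simp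
  show "10*q + 7 = q * (5 choose 3) + length s5_7" by (simp add: ch5 len_s5_7)
  have A: "assoc_pair 5 (10*q + 7) (int (q*(5-2)) + 2) (1)"
    unfolding assoc_pair_def by (simp add: ch5)
  then show "assoc_pair 5 (10*q + 7) (int (q*(5-2)) + 2) (1)" .
  have X: "real_of_int (int (q*(5-2)) + 2) * real (5::nat) * (real (5::nat) - 1) / 6 = real (10*q + 7) - 1/3"
    by (simp add: algebra_simps)
  have F: "int (10*q + 7) = \<lceil> real (10*q + 7) - 1/3 \<rceil>"
    by (rule ceiling_unique[symmetric]) simp_all
  show "C1 5 (10*q + 7)"
  proof (rule C1I[OF _ _ A])
    show "(int (q*(5-2)) + 2) mod 3 \<in> {1,2}" by (simp; presburger)
    show "int (10*q + 7) = \<lfloor>real_of_int (int (q*(5-2)) + 2) * real (5::nat) * (real (5::nat) - 1) / 6\<rfloor> \<or> int (10*q + 7) = \<lceil>real_of_int (int (q*(5-2)) + 2) * real (5::nat) * (real (5::nat) - 1) / 6\<rceil>"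
      unfolding X using F by blast
  qed simp_all
qed

definition s11_18 :: "(nat \<times> nat \<times> nat) list" where
  "s11_18 = [(0,3,10), (0,4,6), (0,5,8), (0,7,9), (1,2,7), (1,2,9), (1,3,4), (1,5,6), (1,8,10), (2,3,5), (2,4,10), (2,6,8), (3,6,7), (3,8,9), (4,5,9), (4,7,8), (5,7,10), (6,9,10)]"

lemma okS_s11_18: "okS 11 s11_18" unfolding s11_18_def by code_simp
lemma okP_s11_18: "okP 11 s11_18 1 (-1)" unfolding s11_18_def by code_simp
lemma len_s11_18: "length s11_18 = 18" unfolding s11_18_def by simp

lemma inst_s11_18: "NWBTS 11 (165*q + 18) {0..<11} (theF 11 q s11_18)"
proof (rule generic[where lz="1" and e="(-1)"])
  show "okS 11 s11_18" by (rule okS_s11_18)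
  show "okP 11 s11_18 (1) ((-1))" by (rule okP_s11_18)
  show "(4::nat) \<le> 11" by simp
  show "((-1)::int) \<in> {-2,-1,1,2}" by simp
  show "165*q + 18 = q * (11 choose 3) + length s11_18" by (simp add: ch11 len_s11_18)
  have A: "assoc_pair 11 (165*q + 18) (int (q*(11-2)) + 1) ((-1))"
    unfolding assoc_pair_def by (simp add: ch11)
  then show "assoc_pair 11 (165*q + 18) (int (q*(11-2)) + 1) ((-1))" .
  have X: "real_of_int (int (q*(11-2)) + 1) * real (11::nat) * (real (11::nat) - 1) / 6 = real (165*q + 18) + 1/3"
    by (simp add: algebra_simps)
  have F: "int (165*q + 18) = \<lfloor> real (165*q + 18) + 1/3 \<rfloor>"
    by (rule floor_unique[symmetric]) simp_all
  show "C1 11 (165*q + 18)"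
  proof (rule C1I[OF _ _ A])
    show "(int (q*(11-2)) + 1) mod 3 \<in> {1,2}" by (simp; presburger)
    show "int (165*q + 18) = \<lfloor>real_of_int (int (q*(11-2)) + 1) * real (11::nat) * (real (11::nat) - 1) / 6\<rfloor> \<or> int (165*q + 18) = \<lceil>real_of_int (int (q*(11-2)) + 1) * real (11::nat) * (real (11::nat) - 1) / 6\<rceil>"
      unfolding X using F by blast
  qed simp_all
qed

definition s11_19 :: "(nat \<times> nat \<times> nat) list" where
  "s11_19 = [(0,1,2), (0,1,6), (0,4,10), (0,5,7), (0,8,9), (1,2,3), (1,4,8), (1,5,9), (1,7,10), (2,3,10), (2,4,9), (2,5,6), (2,7,8), (3,4,5), (3,6,8), (3,7,9), (4,6,7), (5,8,10), (6,9,10)]"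

lemma okS_s11_19: "okS 11 s11_19" unfolding s11_19_def by code_simp
lemma okP_s11_19: "okP 11 s11_19 1 2" unfolding s11_19_def by code_simp
lemma len_s11_19: "length s11_19 = 19" unfolding s11_19_def by simp

lemma inst_s11_19: "NWBTS 11 (165*q + 19) {0..<11} (theF 11 q s11_19)"
proof (rule generic[where lz="1" and e="2"])
  show "okS 11 s11_19" by (rule okS_s11_19)
  show "okP 11 s11_19 (1) (2)" by (rule okP_s11_19)
  show "(4::nat) \<le> 11" by simp
  show "(2::int) \<in> {-2,-1,1,2}" by simp
  show "165*q + 19 = q * (11 choose 3) + length s11_19" by (simp add: ch11 len_s11_19)
  have A: "assoc_pair 11 (165*q + 19) (int (q*(11-2)) + 1) (2)"
    unfolding assoc_pair_def by (simp add: ch11)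
  then show "assoc_pair 11 (165*q + 19) (int (q*(11-2)) + 1) (2)" .
  have X: "real_of_int (int (q*(11-2)) + 1) * real (11::nat) * (real (11::nat) - 1) / 6 = real (165*q + 19) - 2/3"
    by (simp add: algebra_simps)
  have F: "int (165*q + 19) = \<lceil> real (165*q + 19) - 2/3 \<rceil>"
    by (rule ceiling_unique[symmetric]) simp_all
  show "C1 11 (165*q + 19)"
  proof (rule C1I[OF _ _ A])
    show "(int (q*(11-2)) + 1) mod 3 \<in> {1,2}" by (simp; presburger)
    show "int (165*q + 19) = \<lfloor>real_of_int (int (q*(11-2)) + 1) * real (11::nat) * (real (11::nat) - 1) / 6\<rfloor> \<or> int (165*q + 19) = \<lceil>real_of_int (int (q*(11-2)) + 1) * real (11::nat) * (real (11::nat) - 1) / 6\<rceil>"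
      unfolding X using F by blast
  qed simp_all
qed

definition s11_36 :: "(nat \<times> nat \<times> nat) list" where
  "s11_36 = [(0,1,3), (0,2,5), (0,2,10), (0,3,6), (0,3,9), (0,4,5), (0,4,9), (0,6,8), (0,7,8), (0,7,10), (1,2,5), (1,3,10), (1,4,7), (1,4,8), (1,5,9), (1,6,8), (1,6,10), (1,7,9), (2,3,4), (2,4,6), (2,6,7), (2,7,9), (2,8,9), (2,8,10), (3,4,8), (3,5,7), (3,5,8), (3,6,9), (3,7,10), (4,5,10), (4,6,7), (4,9,10), (5,6,9), (5,6,10), (5,7,8), (8,9,10)]"

lemma okS_s11_36: "okS 11 s11_36" unfolding s11_36_def by code_simp
lemma okP_s11_36: "okP 11 s11_36 2 (-2)" unfolding s11_36_def by code_simp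
lemma len_s11_36: "length s11_36 = 36" unfolding s11_36_def by simp

lemma inst_s11_36: "NWBTS 11 (165*q + 36) {0..<11} (theF 11 q s11_36)"
proof (rule generic[where lz="2" and e="(-2)"])
  show "okS 11 s11_36" by (rule okS_s11_36)
  show "okP 11 s11_36 (2) ((-2))" by (rule okP_s11_36)
  show "(4::nat) \<le> 11" by simp
  show "((-2)::int) \<in> {-2,-1,1,2}" by simp
  show "165*q + 36 = q * (11 choose 3) + length s11_36" by (simp add: ch11 len_s11_36)
  have A: "assoc_pair 11 (165*q + 36) (int (q*(11-2)) + 2) ((-2))"
    unfolding assoc_pair_def by (simp add: ch11)
  then show "assoc_pair 11 (165*q + 36) (int (q*(11-2)) + 2) ((-2))" .
  have X: "real_of_int (int (q*(11-2)) + 2) * real (11::nat) * (real (11::nat) - 1) / 6 = real (165*q + 36) + 2/3"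
    by (simp add: algebra_simps)
  have F: "int (165*q + 36) = \<lfloor> real (165*q + 36) + 2/3 \<rfloor>"
    by (rule floor_unique[symmetric]) simp_all
  show "C1 11 (165*q + 36)"
  proof (rule C1I[OF _ _ A])
    show "(int (q*(11-2)) + 2) mod 3 \<in> {1,2}" by (simp; presburger)
    show "int (165*q + 36) = \<lfloor>real_of_int (int (q*(11-2)) + 2) * real (11::nat) * (real (11::nat) - 1) / 6\<rfloor> \<or> int (165*q + 36) = \<lceil>real_of_int (int (q*(11-2)) + 2) * real (11::nat) * (real (11::nat) - 1) / 6\<rceil>"
      unfolding X using F by blast
  qed simp_all
qed

definition s11_37 :: "(nat \<times> nat \<times> nat) list" where
  "s11_37 = [(0,1,2), (0,1,5), (0,1,10), (0,2,7), (0,2,9), (0,3,5), (0,3,8), (0,4,6), (0,4,8), (0,6,10), (0,7,9), (1,3,8), (1,3,9), (1,4,7), (1,4,10), (1,5,6), (1,6,9), (1,7,8), (2,3,6), (2,3,10), (2,4,6), (2,4,10), (2,5,7), (2,5,8), (2,8,9), (3,4,5), (3,4,7), (3,6,7), (3,9,10), (4,5,9), (4,8,9), (5,6,8), (5,7,10), (5,9,10), (6,7,9), (6,8,10), (7,8,10)]"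

lemma okS_s11_37: "okS 11 s11_37" unfolding s11_37_def by code_simp
lemma okP_s11_37: "okP 11 s11_37 2 1" unfolding s11_37_def by code_simp
lemma len_s11_37: "length s11_37 = 37" unfolding s11_37_def by simp

lemma inst_s11_37: "NWBTS 11 (165*q + 37) {0..<11} (theF 11 q s11_37)"
proof (rule generic[where lz="2" and e="1"])
  show "okS 11 s11_37" by (rule okS_s11_37)
  show "okP 11 s11_37 (2) (1)" by (rule okP_s11_37)
  show "(4::nat) \<le> 11" by simp
  show "(1::int) \<in> {-2,-1,1,2}" by simp
  show "165*q + 37 = q * (11 choose 3) + length s11_37" by (simp add: ch11 len_s11_37)
  have A: "assoc_pair 11 (165*q + 37) (int (q*(11-2)) + 2) (1)"
    unfolding assoc_pair_def by (simp add: ch11)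
  then show "assoc_pair 11 (165*q + 37) (int (q*(11-2)) + 2) (1)" .
  have X: "real_of_int (int (q*(11-2)) + 2) * real (11::nat) * (real (11::nat) - 1) / 6 = real (165*q + 37) - 1/3"
    by (simp add: algebra_simps)
  have F: "int (165*q + 37) = \<lceil> real (165*q + 37) - 1/3 \<rceil>"
    by (rule ceiling_unique[symmetric]) simp_all
  show "C1 11 (165*q + 37)"
  proof (rule C1I[OF _ _ A])
    show "(int (q*(11-2)) + 2) mod 3 \<in> {1,2}" by (simp; presburger)
    show "int (165*q + 37) = \<lfloor>real_of_int (int (q*(11-2)) + 2) * real (11::nat) * (real (11::nat) - 1) / 6\<rfloor> \<or> int (165*q + 37) = \<lceil>real_of_int (int (q*(11-2)) + 2) * real (11::nat) * (real (11::nat) - 1) / 6\<rceil>"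
      unfolding X using F by blast
  qed simp_all
qed

definition s11_73 :: "(nat \<times> nat \<times> nat) list" where
  "s11_73 = [(0,1,4), (0,1,5), (0,1,9), (0,2,5), (0,2,7), (0,2,8), (0,3,4), (0,3,5), (0,3,6), (0,3,8), (0,4,6), (0,4,10), (0,5,9), (0,6,7), (0,6,9), (0,7,8), (0,7,10), (0,8,10), (0,9,10), (1,2,4), (1,2,6), (1,2,7), (1,2,8), (1,2,10), (1,3,7), (1,3,8), (1,3,9), (1,3,10), (1,4,5), (1,4,9), (1,5,6), (1,5,10), (1,6,8), (1,6,10), (1,7,8), (1,7,9), (2,3,5), (2,3,6), (2,3,7), (2,3,8), (2,4,6), (2,4,9), (2,4,10), (2,5,6), (2,5,10), (2,7,9), (2,8,9), (2,9,10), (3,4,5), (3,4,7), (3,4,9), (3,5,10), (3,6,8), (3,6,9), (3,7,10), (3,9,10), (4,5,7), (4,5,8), (4,6,7), (4,6,10), (4,7,8), (4,8,9), (4,8,10), (5,6,7), (5,6,9), (5,7,8), (5,7,9), (5,8,9), (5,8,10), (6,7,10), (6,8,9), (6,8,10), (7,9,10)]"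

lemma okS_s11_73: "okS 11 s11_73" unfolding s11_73_def by code_simp
lemma okP_s11_73: "okP 11 s11_73 4 (-1)" unfolding s11_73_def by code_simp
lemma len_s11_73: "length s11_73 = 73" unfolding s11_73_def by simp

lemma inst_s11_73: "NWBTS 11 (165*q + 73) {0..<11} (theF 11 q s11_73)"
proof (rule generic[where lz="4" and e="(-1)"])
  show "okS 11 s11_73" by (rule okS_s11_73)
  show "okP 11 s11_73 (4) ((-1))" by (rule okP_s11_73)
  show "(4::nat) \<le> 11" by simp
  show "((-1)::int) \<in> {-2,-1,1,2}" by simp
  show "165*q + 73 = q * (11 choose 3) + length s11_73" by (simp add: ch11 len_s11_73)
  have A: "assoc_pair 11 (165*q + 73) (int (q*(11-2)) + 4) ((-1))"
    unfolding assoc_pair_def by (simp add: ch11)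
  then show "assoc_pair 11 (165*q + 73) (int (q*(11-2)) + 4) ((-1))" .
  have X: "real_of_int (int (q*(11-2)) + 4) * real (11::nat) * (real (11::nat) - 1) / 6 = real (165*q + 73) + 1/3"
    by (simp add: algebra_simps)
  have F: "int (165*q + 73) = \<lfloor> real (165*q + 73) + 1/3 \<rfloor>"
    by (rule floor_unique[symmetric]) simp_all
  show "C1 11 (165*q + 73)"
  proof (rule C1I[OF _ _ A])
    show "(int (q*(11-2)) + 4) mod 3 \<in> {1,2}" by (simp; presburger)
    show "int (165*q + 73) = \<lfloor>real_of_int (int (q*(11-2)) + 4) * real (11::nat) * (real (11::nat) - 1) / 6\<rfloor> \<or> int (165*q + 73) = \<lceil>real_of_int (int (q*(11-2)) + 4) * real (11::nat) * (real (11::nat) - 1) / 6\<rceil>"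
      unfolding X using F by blast
  qed simp_all
qed

definition s11_74 :: "(nat \<times> nat \<times> nat) list" where
  "s11_74 = [(0,1,2), (0,1,5), (0,1,6), (0,1,7), (0,1,8), (0,2,6), (0,2,7), (0,2,8), (0,3,4), (0,3,6), (0,3,9), (0,4,5), (0,4,7), (0,4,10), (0,5,7), (0,5,9), (0,6,10), (0,8,9), (0,8,10), (0,9,10), (1,2,3), (1,2,4), (1,2,7), (1,2,10), (1,3,6), (1,3,8), (1,3,9), (1,4,8), (1,4,9), (1,4,10), (1,5,6), (1,5,7), (1,5,9), (1,6,9), (1,7,10), (1,8,10), (2,3,4), (2,3,5), (2,3,9), (2,3,10), (2,4,6), (2,4,9), (2,5,6), (2,5,8), (2,5,9), (2,6,10), (2,7,8), (2,7,10), (2,8,9), (3,4,5), (3,4,8), (3,5,7), (3,5,10), (3,6,7), (3,6,8), (3,7,9), (3,7,10), (3,8,10), (4,5,6), (4,5,8), (4,6,7), (4,6,10), (4,7,8), (4,7,9), (4,9,10), (5,6,8), (5,7,10), (5,8,10), (5,9,10), (6,7,8), (6,7,9), (6,8,9), (6,9,10), (7,8,9)]"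

lemma okS_s11_74: "okS 11 s11_74" unfolding s11_74_def by code_simp
lemma okP_s11_74: "okP 11 s11_74 4 2" unfolding s11_74_def by code_simp
lemma len_s11_74: "length s11_74 = 74" unfolding s11_74_def by simp

lemma inst_s11_74: "NWBTS 11 (165*q + 74) {0..<11} (theF 11 q s11_74)"
proof (rule generic[where lz="4" and e="2"])
  show "okS 11 s11_74" by (rule okS_s11_74)
  show "okP 11 s11_74 (4) (2)" by (rule okP_s11_74)
  show "(4::nat) \<le> 11" by simp
  show "(2::int) \<in> {-2,-1,1,2}" by simp
  show "165*q + 74 = q * (11 choose 3) + length s11_74" by (simp add: ch11 len_s11_74)
  have A: "assoc_pair 11 (165*q + 74) (int (q*(11-2)) + 4) (2)"
    unfolding assoc_pair_def by (simp add: ch11)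
  then show "assoc_pair 11 (165*q + 74) (int (q*(11-2)) + 4) (2)" .
  have X: "real_of_int (int (q*(11-2)) + 4) * real (11::nat) * (real (11::nat) - 1) / 6 = real (165*q + 74) - 2/3"
    by (simp add: algebra_simps)
  have F: "int (165*q + 74) = \<lceil> real (165*q + 74) - 2/3 \<rceil>"
    by (rule ceiling_unique[symmetric]) simp_all
  show "C1 11 (165*q + 74)"
  proof (rule C1I[OF _ _ A])
    show "(int (q*(11-2)) + 4) mod 3 \<in> {1,2}" by (simp; presburger)
    show "int (165*q + 74) = \<lfloor>real_of_int (int (q*(11-2)) + 4) * real (11::nat) * (real (11::nat) - 1) / 6\<rfloor> \<or> int (165*q + 74) = \<lceil>real_of_int (int (q*(11-2)) + 4) * real (11::nat) * (real (11::nat) - 1) / 6\<rceil>"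
      unfolding X using F by blast
  qed simp_all
qed

definition s11_91 :: "(nat \<times> nat \<times> nat) list" where
  "s11_91 = [(0,1,3), (0,1,4), (0,1,9), (0,1,10), (0,2,3), (0,2,4), (0,2,5), (0,2,9), (0,2,10), (0,3,5), (0,3,7), (0,3,8), (0,3,10), (0,4,6), (0,4,8), (0,4,9), (0,5,6), (0,5,8), (0,5,10), (0,6,7), (0,6,8), (0,6,9), (0,7,8), (0,7,9), (0,7,10), (1,2,5), (1,2,6), (1,2,8), (1,2,9), (1,3,4), (1,3,5), (1,3,7), (1,3,10), (1,4,5), (1,4,6), (1,4,7), (1,5,8), (1,5,10), (1,6,7), (1,6,8), (1,6,10), (1,7,8), (1,7,9), (1,8,9), (1,9,10), (2,3,6), (2,3,7), (2,3,8), (2,4,5), (2,4,7), (2,4,8), (2,4,10), (2,5,7), (2,5,10), (2,6,7), (2,6,8), (2,6,9), (2,7,9), (2,8,10), (2,9,10), (3,4,6), (3,4,7), (3,4,9), (3,4,10), (3,5,6), (3,5,8), (3,5,9), (3,6,9), (3,6,10), (3,7,8), (3,8,9), (3,9,10), (4,5,7), (4,5,9), (4,5,10), (4,6,8), (4,6,9), (4,7,10), (4,8,9), (4,8,10), (5,6,7), (5,6,9), (5,6,10), (5,7,8), (5,7,9), (5,8,9), (6,7,10), (6,8,10), (7,8,10), (7,9,10), (8,9,10)]"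

lemma okS_s11_91: "okS 11 s11_91" unfolding s11_91_def by code_simp
lemma okP_s11_91: "okP 11 s11_91 5 (-2)" unfolding s11_91_def by code_simp
lemma len_s11_91: "length s11_91 = 91" unfolding s11_91_def by simp

lemma inst_s11_91: "NWBTS 11 (165*q + 91) {0..<11} (theF 11 q s11_91)"
proof (rule generic[where lz="5" and e="(-2)"])
  show "okS 11 s11_91" by (rule okS_s11_91)
  show "okP 11 s11_91 (5) ((-2))" by (rule okP_s11_91)
  show "(4::nat) \<le> 11" by simp
  show "((-2)::int) \<in> {-2,-1,1,2}" by simp
  show "165*q + 91 = q * (11 choose 3) + length s11_91" by (simp add: ch11 len_s11_91)
  have A: "assoc_pair 11 (165*q + 91) (int (q*(11-2)) + 5) ((-2))"
    unfolding assoc_pair_def by (simp add: ch11)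
  then show "assoc_pair 11 (165*q + 91) (int (q*(11-2)) + 5) ((-2))" .
  have X: "real_of_int (int (q*(11-2)) + 5) * real (11::nat) * (real (11::nat) - 1) / 6 = real (165*q + 91) + 2/3"
    by (simp add: algebra_simps)
  have F: "int (165*q + 91) = \<lfloor> real (165*q + 91) + 2/3 \<rfloor>"
    by (rule floor_unique[symmetric]) simp_all
  show "C1 11 (165*q + 91)"
  proof (rule C1I[OF _ _ A])
    show "(int (q*(11-2)) + 5) mod 3 \<in> {1,2}" by (simp; presburger)
    show "int (165*q + 91) = \<lfloor>real_of_int (int (q*(11-2)) + 5) * real (11::nat) * (real (11::nat) - 1) / 6\<rfloor> \<or> int (165*q + 91) = \<lceil>real_of_int (int (q*(11-2)) + 5) * real (11::nat) * (real (11::nat) - 1) / 6\<rceil>"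
      unfolding X using F by blast
  qed simp_all
qed

definition s11_92 :: "(nat \<times> nat \<times> nat) list" where
  "s11_92 = [(0,1,2), (0,1,3), (0,1,6), (0,1,7), (0,1,8), (0,1,10), (0,2,3), (0,2,4), (0,2,6), (0,2,9), (0,2,10), (0,3,7), (0,3,9), (0,3,10), (0,4,5), (0,4,7), (0,4,8), (0,4,9), (0,5,6), (0,5,7), (0,5,8), (0,5,10), (0,6,8), (0,6,10), (0,7,9), (0,8,9), (1,2,3), (1,2,5), (1,2,9), (1,3,4), (1,3,5), (1,3,6), (1,4,6), (1,4,7), (1,4,8), (1,4,10), (1,5,7), (1,5,8), (1,5,9), (1,6,7), (1,6,9), (1,7,10), (1,8,9), (1,8,10), (1,9,10), (2,3,4), (2,3,9), (2,3,10), (2,4,5), (2,4,7), (2,4,8), (2,5,7), (2,5,8), (2,5,9), (2,6,7), (2,6,8), (2,6,9), (2,6,10), (2,7,8), (2,7,10), (2,8,10), (3,4,6), (3,4,8), (3,4,10), (3,5,6), (3,5,7), (3,5,8), (3,5,9), (3,6,7), (3,6,10), (3,7,8), (3,7,9), (3,8,9), (3,8,10), (4,5,6), (4,5,9), (4,5,10), (4,6,8), (4,6,9), (4,7,9), (4,7,10), (4,9,10), (5,6,8), (5,6,10), (5,7,10), (5,9,10), (6,7,8), (6,7,9), (6,9,10), (7,8,9), (7,8,10), (8,9,10)]"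

lemma okS_s11_92: "okS 11 s11_92" unfolding s11_92_def by code_simp
lemma okP_s11_92: "okP 11 s11_92 5 1" unfolding s11_92_def by code_simp
lemma len_s11_92: "length s11_92 = 92" unfolding s11_92_def by simp

lemma inst_s11_92: "NWBTS 11 (165*q + 92) {0..<11} (theF 11 q s11_92)"
proof (rule generic[where lz="5" and e="1"])
  show "okS 11 s11_92" by (rule okS_s11_92)
  show "okP 11 s11_92 (5) (1)" by (rule okP_s11_92)
  show "(4::nat) \<le> 11" by simp
  show "(1::int) \<in> {-2,-1,1,2}" by simp
  show "165*q + 92 = q * (11 choose 3) + length s11_92" by (simp add: ch11 len_s11_92)
  have A: "assoc_pair 11 (165*q + 92) (int (q*(11-2)) + 5) (1)"
    unfolding assoc_pair_def by (simp add: ch11)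
  then show "assoc_pair 11 (165*q + 92) (int (q*(11-2)) + 5) (1)" .
  have X: "real_of_int (int (q*(11-2)) + 5) * real (11::nat) * (real (11::nat) - 1) / 6 = real (165*q + 92) - 1/3"
    by (simp add: algebra_simps)
  have F: "int (165*q + 92) = \<lceil> real (165*q + 92) - 1/3 \<rceil>"
    by (rule ceiling_unique[symmetric]) simp_all
  show "C1 11 (165*q + 92)"
  proof (rule C1I[OF _ _ A])
    show "(int (q*(11-2)) + 5) mod 3 \<in> {1,2}" by (simp; presburger)
    show "int (165*q + 92) = \<lfloor>real_of_int (int (q*(11-2)) + 5) * real (11::nat) * (real (11::nat) - 1) / 6\<rfloor> \<or> int (165*q + 92) = \<lceil>real_of_int (int (q*(11-2)) + 5) * real (11::nat) * (real (11::nat) - 1) / 6\<rceil>"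
      unfolding X using F by blast
  qed simp_all
qed

definition s11_128 :: "(nat \<times> nat \<times> nat) list" where
  "s11_128 = [(0,1,3), (0,1,4), (0,1,6), (0,1,7), (0,1,8), (0,1,9), (0,2,3), (0,2,4), (0,2,5), (0,2,6), (0,2,8), (0,2,10), (0,3,4), (0,3,6), (0,3,7), (0,3,9), (0,3,10), (0,4,5), (0,4,7), (0,4,9), (0,4,10), (0,5,6), (0,5,7), (0,5,8), (0,5,9), (0,5,10), (0,6,7), (0,6,8), (0,6,9), (0,7,8), (0,7,10), (0,8,9), (0,8,10), (0,9,10), (1,2,3), (1,2,4), (1,2,5), (1,2,6), (1,2,7), (1,2,8), (1,2,9), (1,2,10), (1,3,4), (1,3,5), (1,3,6), (1,3,7), (1,3,10), (1,4,5), (1,4,6), (1,4,8), (1,4,9), (1,5,7), (1,5,8), (1,5,9), (1,5,10), (1,6,7), (1,6,8), (1,6,10), (1,7,9), (1,7,10), (1,8,9), (1,8,10), (1,9,10), (2,3,4), (2,3,5), (2,3,7), (2,3,8), (2,3,9), (2,4,5), (2,4,7), (2,4,8), (2,4,9), (2,5,6), (2,5,9), (2,5,10), (2,6,7), (2,6,8), (2,6,9), (2,6,10), (2,7,8), (2,7,9), (2,7,10), (2,8,10), (2,9,10), (3,4,6), (3,4,8), (3,4,9), (3,4,10), (3,5,6), (3,5,7), (3,5,8), (3,5,9), (3,5,10), (3,6,8), (3,6,9), (3,6,10), (3,7,8), (3,7,9), (3,7,10), (3,8,9), (3,8,10), (4,5,6), (4,5,7), (4,5,8), (4,5,10), (4,6,7),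 (4,6,8), (4,6,9), (4,6,10), (4,7,8), (4,7,9), (4,7,10), (4,8,10), (4,9,10), (5,6,7), (5,6,9), (5,6,10), (5,7,8), (5,7,9), (5,8,9), (5,8,10), (6,7,8), (6,7,10), (6,8,9), (6,9,10), (7,8,9), (7,9,10), (8,9,10)]"

lemma okS_s11_128: "okS 11 s11_128" unfolding s11_128_def by code_simp
lemma okP_s11_128: "okP 11 s11_128 7 (-1)" unfolding s11_128_def by code_simp
lemma len_s11_128: "length s11_128 = 128" unfolding s11_128_def by simp

lemma inst_s11_128: "NWBTS 11 (165*q + 128) {0..<11} (theF 11 q s11_128)"
proof (rule generic[where lz="7" and e="(-1)"])
  show "okS 11 s11_128" by (rule okS_s11_128)
  show "okP 11 s11_128 (7) ((-1))" by (rule okP_s11_128)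
  show "(4::nat) \<le> 11" by simp
  show "((-1)::int) \<in> {-2,-1,1,2}" by simp
  show "165*q + 128 = q * (11 choose 3) + length s11_128" by (simp add: ch11 len_s11_128)
  have A: "assoc_pair 11 (165*q + 128) (int (q*(11-2)) + 7) ((-1))"
    unfolding assoc_pair_def by (simp add: ch11)
  then show "assoc_pair 11 (165*q + 128) (int (q*(11-2)) + 7) ((-1))" .
  have X: "real_of_int (int (q*(11-2)) + 7) * real (11::nat) * (real (11::nat) - 1) / 6 = real (165*q + 128) + 1/3"
    by (simp add: algebra_simps)
  have F: "int (165*q + 128) = \<lfloor> real (165*q + 128) + 1/3 \<rfloor>"
    by (rule floor_unique[symmetric]) simp_all
  show "C1 11 (165*q + 128)"
  proof (rule C1I[OF _ _ A])
    show "(int (q*(11-2)) + 7) mod 3 \<in> {1,2}" by (simp; presburger)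
    show "int (165*q + 128) = \<lfloor>real_of_int (int (q*(11-2)) + 7) * real (11::nat) * (real (11::nat) - 1) / 6\<rfloor> \<or> int (165*q + 128) = \<lceil>real_of_int (int (q*(11-2)) + 7) * real (11::nat) * (real (11::nat) - 1) / 6\<rceil>"
      unfolding X using F by blast
  qed simp_all
qed

definition s11_129 :: "(nat \<times> nat \<times> nat) list" where
  "s11_129 = [(0,1,2), (0,1,4), (0,1,5), (0,1,6), (0,1,7), (0,1,8), (0,1,9), (0,1,10), (0,2,3), (0,2,4), (0,2,6), (0,2,7), (0,2,8), (0,2,9), (0,3,4), (0,3,5), (0,3,7), (0,3,8), (0,3,10), (0,4,6), (0,4,7), (0,4,8), (0,4,10), (0,5,6), (0,5,7), (0,5,8), (0,5,9), (0,5,10), (0,6,7), (0,6,9), (0,6,10), (0,7,9), (0,8,9), (0,8,10), (0,9,10), (1,2,3), (1,2,4), (1,2,6), (1,2,7), (1,2,8), (1,2,9), (1,2,10), (1,3,4), (1,3,5), (1,3,6), (1,3,7), (1,3,8), (1,3,9), (1,4,5), (1,4,6), (1,4,9), (1,4,10), (1,5,6), (1,5,7), (1,5,8), (1,5,10), (1,6,7), (1,6,9), (1,7,8), (1,7,10), (1,8,9), (1,8,10), (1,9,10), (2,3,5), (2,3,6), (2,3,7), (2,3,8), (2,3,9), (2,3,10), (2,4,5), (2,4,7), (2,4,8), (2,4,9), (2,4,10), (2,5,6), (2,5,7), (2,5,8), (2,5,9), (2,5,10), (2,6,8), (2,6,9), (2,6,10), (2,7,8), (2,7,10), (2,9,10),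 (3,4,5), (3,4,6), (3,4,7), (3,4,9), (3,4,10), (3,5,6), (3,5,9), (3,5,10), (3,6,7), (3,6,8), (3,6,10), (3,7,8), (3,7,9), (3,8,9), (3,8,10), (3,9,10), (4,5,6), (4,5,7), (4,5,8), (4,5,9), (4,6,8), (4,6,9), (4,6,10), (4,7,8), (4,7,9), (4,7,10), (4,8,9), (4,8,10), (5,6,7), (5,6,8), (5,7,9), (5,7,10), (5,8,9), (5,8,10), (5,9,10), (6,7,8), (6,7,9), (6,7,10), (6,8,9), (6,8,10), (6,9,10), (7,8,9), (7,8,10), (7,9,10)]"

lemma okS_s11_129: "okS 11 s11_129" unfolding s11_129_def by code_simp
lemma okP_s11_129: "okP 11 s11_129 7 2" unfolding s11_129_def by code_simp
lemma len_s11_129: "length s11_129 = 129" unfolding s11_129_def by simp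

lemma inst_s11_129: "NWBTS 11 (165*q + 129) {0..<11} (theF 11 q s11_129)"
proof (rule generic[where lz="7" and e="2"])
  show "okS 11 s11_129" by (rule okS_s11_129)
  show "okP 11 s11_129 (7) (2)" by (rule okP_s11_129)
  show "(4::nat) \<le> 11" by simp
  show "(2::int) \<in> {-2,-1,1,2}" by simp
  show "165*q + 129 = q * (11 choose 3) + length s11_129" by (simp add: ch11 len_s11_129)
  have A: "assoc_pair 11 (165*q + 129) (int (q*(11-2)) + 7) (2)"
    unfolding assoc_pair_def by (simp add: ch11)
  then show "assoc_pair 11 (165*q + 129) (int (q*(11-2)) + 7) (2)" .
  have X: "real_of_int (int (q*(11-2)) + 7) * real (11::nat) * (real (11::nat) - 1) / 6 = real (165*q + 129) - 2/3"
    by (simp add: algebra_simps)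
  have F: "int (165*q + 129) = \<lceil> real (165*q + 129) - 2/3 \<rceil>"
    by (rule ceiling_unique[symmetric]) simp_all
  show "C1 11 (165*q + 129)"
  proof (rule C1I[OF _ _ A])
    show "(int (q*(11-2)) + 7) mod 3 \<in> {1,2}" by (simp; presburger)
    show "int (165*q + 129) = \<lfloor>real_of_int (int (q*(11-2)) + 7) * real (11::nat) * (real (11::nat) - 1) / 6\<rfloor> \<or> int (165*q + 129) = \<lceil>real_of_int (int (q*(11-2)) + 7) * real (11::nat) * (real (11::nat) - 1) / 6\<rceil>"
      unfolding X using F by blast
  qed simp_all
qed

definition s11_146 :: "(nat \<times> nat \<times> nat) list" where
  "s11_146 = [(0,1,3), (0,1,4), (0,1,5), (0,1,7), (0,1,8), (0,1,9), (0,1,10), (0,2,3), (0,2,4), (0,2,5), (0,2,6), (0,2,7), (0,2,8), (0,2,9), (0,2,10), (0,3,4), (0,3,5), (0,3,6), (0,3,7), (0,3,8), (0,3,9), (0,3,10), (0,4,5), (0,4,6), (0,4,7), (0,4,8), (0,4,9), (0,5,6), (0,5,8), (0,5,9), (0,5,10), (0,6,7), (0,6,8), (0,6,9), (0,6,10), (0,7,8), (0,7,9), (0,7,10), (0,8,10), (0,9,10), (1,2,4), (1,2,5), (1,2,6), (1,2,7), (1,2,8), (1,2,9), (1,2,10), (1,3,4), (1,3,5), (1,3,6), (1,3,7), (1,3,8), (1,3,9), (1,3,10), (1,4,5), (1,4,6), (1,4,7), (1,4,9), (1,4,10), (1,5,6), (1,5,7), (1,5,8), (1,5,10), (1,6,7),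 (1,6,8), (1,6,9), (1,6,10), (1,7,8), (1,7,9), (1,8,9), (1,8,10), (1,9,10), (2,3,4), (2,3,5), (2,3,6), (2,3,7), (2,3,8), (2,3,9), (2,4,5), (2,4,6), (2,4,7), (2,4,8), (2,4,10), (2,5,7), (2,5,8), (2,5,9), (2,5,10), (2,6,7), (2,6,8), (2,6,9), (2,6,10), (2,7,9), (2,7,10), (2,8,9), (2,8,10), (2,9,10), (3,4,6), (3,4,7), (3,4,8), (3,4,9), (3,4,10), (3,5,6), (3,5,7), (3,5,8), (3,5,9), (3,5,10), (3,6,7), (3,6,9), (3,6,10), (3,7,8), (3,7,10), (3,8,9), (3,8,10), (3,9,10), (4,5,6), (4,5,7), (4,5,8), (4,5,9), (4,5,10), (4,6,8), (4,6,9), (4,6,10), (4,7,8), (4,7,9), (4,7,10), (4,8,9), (4,8,10), (4,9,10), (5,6,7), (5,6,8), (5,6,9), (5,6,10), (5,7,8), (5,7,9), (5,7,10), (5,8,9), (5,9,10), (6,7,8), (6,7,9), (6,7,10), (6,8,9), (6,8,10), (7,8,9), (7,8,10), (7,9,10), (8,9,10)]"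

lemma okS_s11_146: "okS 11 s11_146" unfolding s11_146_def by code_simp
lemma okP_s11_146: "okP 11 s11_146 8 (-2)" unfolding s11_146_def by code_simp
lemma len_s11_146: "length s11_146 = 146" unfolding s11_146_def by simp

lemma inst_s11_146: "NWBTS 11 (165*q + 146) {0..<11} (theF 11 q s11_146)"
proof (rule generic[where lz="8" and e="(-2)"])
  show "okS 11 s11_146" by (rule okS_s11_146)
  show "okP 11 s11_146 (8) ((-2))" by (rule okP_s11_146)
  show "(4::nat) \<le> 11" by simp
  show "((-2)::int) \<in> {-2,-1,1,2}" by simp
  show "165*q + 146 = q * (11 choose 3) + length s11_146" by (simp add: ch11 len_s11_146)
  have A: "assoc_pair 11 (165*q + 146) (int (q*(11-2)) + 8) ((-2))"
    unfolding assoc_pair_def by (simp add: ch11)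
  then show "assoc_pair 11 (165*q + 146) (int (q*(11-2)) + 8) ((-2))" .
  have X: "real_of_int (int (q*(11-2)) + 8) * real (11::nat) * (real (11::nat) - 1) / 6 = real (165*q + 146) + 2/3"
    by (simp add: algebra_simps)
  have F: "int (165*q + 146) = \<lfloor> real (165*q + 146) + 2/3 \<rfloor>"
    by (rule floor_unique[symmetric]) simp_all
  show "C1 11 (165*q + 146)"
  proof (rule C1I[OF _ _ A])
    show "(int (q*(11-2)) + 8) mod 3 \<in> {1,2}" by (simp; presburger)
    show "int (165*q + 146) = \<lfloor>real_of_int (int (q*(11-2)) + 8) * real (11::nat) * (real (11::nat) - 1) / 6\<rfloor> \<or> int (165*q + 146) = \<lceil>real_of_int (int (q*(11-2)) + 8) * real (11::nat) * (real (11::nat) - 1) / 6\<rceil>"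
      unfolding X using F by blast
  qed simp_all
qed

definition s11_147 :: "(nat \<times> nat \<times> nat) list" where
  "s11_147 = [(0,1,2), (0,1,3), (0,1,4), (0,1,5), (0,1,6), (0,1,7), (0,1,8), (0,1,9), (0,1,10), (0,2,3), (0,2,4), (0,2,5), (0,2,6), (0,2,7), (0,2,8), (0,2,9), (0,2,10), (0,3,4), (0,3,5), (0,3,6), (0,3,7), (0,3,8), (0,3,9), (0,4,5), (0,4,7), (0,4,8), (0,4,9), (0,4,10), (0,5,6), (0,5,7), (0,5,9), (0,5,10), (0,6,7), (0,6,8), (0,6,9), (0,6,10), (0,7,8), (0,7,10), (0,8,9), (0,8,10), (0,9,10), (1,2,3), (1,2,4), (1,2,5), (1,2,6), (1,2,8), (1,2,10), (1,3,5), (1,3,6), (1,3,7), (1,3,8), (1,3,9), (1,3,10), (1,4,5), (1,4,6), (1,4,7), (1,4,8), (1,4,9), (1,4,10), (1,5,7), (1,5,8), (1,5,9), (1,5,10), (1,6,7), (1,6,8), (1,6,9), (1,6,10), (1,7,8), (1,7,9), (1,7,10), (1,8,9), (1,9,10), (2,3,4), (2,3,6), (2,3,7), (2,3,8), (2,3,9), (2,3,10), (2,4,5), (2,4,6), (2,4,7), (2,4,8), (2,4,9), (2,5,6), (2,5,7), (2,5,8), (2,5,9), (2,5,10), (2,6,7), (2,6,9), (2,6,10), (2,7,8), (2,7,9), (2,7,10), (2,8,9), (2,8,10), (2,9,10), (3,4,5), (3,4,6), (3,4,7), (3,4,8), (3,4,9), (3,4,10), (3,5,6), (3,5,7), (3,5,8),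 (3,5,9), (3,5,10), (3,6,8), (3,6,9), (3,6,10), (3,7,8), (3,7,9), (3,7,10), (3,8,10), (3,9,10), (4,5,6), (4,5,7), (4,5,8), (4,5,10), (4,6,7), (4,6,8), (4,6,9), (4,6,10), (4,7,9), (4,7,10), (4,8,9), (4,8,10), (4,9,10), (5,6,7), (5,6,8), (5,6,9), (5,6,10), (5,7,8), (5,7,9), (5,8,9), (5,8,10), (5,9,10), (6,7,8), (6,7,9), (6,7,10), (6,8,9), (6,8,10), (7,8,9), (7,8,10), (7,9,10), (8,9,10)]"

lemma okS_s11_147: "okS 11 s11_147" unfolding s11_147_def by code_simp
lemma okP_s11_147: "okP 11 s11_147 8 1" unfolding s11_147_def by code_simp
lemma len_s11_147: "length s11_147 = 147" unfolding s11_147_def by simp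

lemma inst_s11_147: "NWBTS 11 (165*q + 147) {0..<11} (theF 11 q s11_147)"
proof (rule generic[where lz="8" and e="1"])
  show "okS 11 s11_147" by (rule okS_s11_147)
  show "okP 11 s11_147 (8) (1)" by (rule okP_s11_147)
  show "(4::nat) \<le> 11" by simp
  show "(1::int) \<in> {-2,-1,1,2}" by simp
  show "165*q + 147 = q * (11 choose 3) + length s11_147" by (simp add: ch11 len_s11_147)
  have A: "assoc_pair 11 (165*q + 147) (int (q*(11-2)) + 8) (1)"
    unfolding assoc_pair_def by (simp add: ch11)
  then show "assoc_pair 11 (165*q + 147) (int (q*(11-2)) + 8) (1)" .
  have X: "real_of_int (int (q*(11-2)) + 8) * real (11::nat) * (real (11::nat) - 1) / 6 = real (165*q + 147) - 1/3"
    by (simp add: algebra_simps)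
  have F: "int (165*q + 147) = \<lceil> real (165*q + 147) - 1/3 \<rceil>"
    by (rule ceiling_unique[symmetric]) simp_all
  show "C1 11 (165*q + 147)"
  proof (rule C1I[OF _ _ A])
    show "(int (q*(11-2)) + 8) mod 3 \<in> {1,2}" by (simp; presburger)
    show "int (165*q + 147) = \<lfloor>real_of_int (int (q*(11-2)) + 8) * real (11::nat) * (real (11::nat) - 1) / 6\<rfloor> \<or> int (165*q + 147) = \<lceil>real_of_int (int (q*(11-2)) + 8) * real (11::nat) * (real (11::nat) - 1) / 6\<rceil>"
      unfolding X using F by blast
  qed simp_all
qed

lemma mod_lem: "(b::nat) mod 55 \<in> {18,19,36,37} \<Longrightarrow> b mod 165 \<in> {18,19,36,37,73,74,91,92,128,129,146,147::nat}"
proof -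
  assume h: "b mod 55 \<in> {18,19,36,37}"
  have m: "b mod 165 mod 55 = b mod 55" by (simp add: mod_mod_cancel)
  have lt: "b mod 165 < 165" by simp
  obtain r where r: "r = b mod 165" by simp
  have d: "r = 55 * (r div 55) + r mod 55" by simp
  have "r div 55 < 3" using lt r by simp
  then have "r div 55 = 0 \<or> r div 55 = 1 \<or> r div 55 = 2" by auto
  then show ?thesis using d h m r by auto
qed

theorem lemma4p1:
  shows "(\<forall>b::nat. b mod 10 \<in> {3,4,6,7} \<longrightarrow>
            (\<exists>(V::nat set) F. NWBTS 5 b V F)) \<and>
         (\<forall>b::nat. b mod 55 \<in> {18,19,36,37} \<longrightarrow>
            (\<exists>(V::nat set) F. NWBTS 11 b V F))"
proof (intro conjI allI impI)
  fix b :: nat assume h: "b mod 10 \<in> {3,4,6,7}"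
  have b: "b = 10 * (b div 10) + b mod 10" by simp
  from h consider "b mod 10 = 3" | "b mod 10 = 4" | "b mod 10 = 6" | "b mod 10 = 7" by auto
  then show "\<exists>(V::nat set) F. NWBTS 5 b V F"
  proof cases
    assume "b mod 10 = 3" then have "b = 10 * (b div 10) + 3" using b by simp
    then show ?thesis using inst_s5_3[of "b div 10"] by metis
  next
    assume "b mod 10 = 4" then have "b = 10 * (b div 10) + 4" using b by simp
    then show ?thesis using inst_s5_4[of "b div 10"] by metis
  next
    assume "b mod 10 = 6" then have "b = 10 * (b div 10) + 6" using b by simp
    then show ?thesis using inst_s5_6[of "b div 10"] by metis
  next
    assume "b mod 10 = 7" then have "b = 10 * (b div 10) + 7" using b by simp
    then show ?thesis using inst_s5_7[of "b div 10"] by metis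
  qed
next
  fix b :: nat assume h: "b mod 55 \<in> {18,19,36,37}"
  have b: "b = 165 * (b div 165) + b mod 165" by simp
  have m: "b mod 165 mod 55 = b mod 55" by (simp add: mod_mod_cancel)
  have lt: "b mod 165 < 165" by simp
  define r where "r = b mod 165"
  have "r \<in> {18,19,36,37,73,74,91,92,128,129,146,147}" using mod_lem[OF h] unfolding r_def .
  then consider "r = 18" | "r = 19" | "r = 36" | "r = 37" | "r = 73" | "r = 74" | "r = 91" | "r = 92" | "r = 128" | "r = 129" | "r = 146" | "r = 147" by auto
  then show "\<exists>(V::nat set) F. NWBTS 11 b V F"
  proof cases
    assume "r = 18" then have "b = 165 * (b div 165) + 18" using b r_def by simp
    then show ?thesis using inst_s11_18[of "b div 165"] by metis
  next
    assume "r = 19" then have "b = 165 * (b div 165) + 19" using b r_def by simp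
    then show ?thesis using inst_s11_19[of "b div 165"] by metis
  next
    assume "r = 36" then have "b = 165 * (b div 165) + 36" using b r_def by simp
    then show ?thesis using inst_s11_36[of "b div 165"] by metis
  next
    assume "r = 37" then have "b = 165 * (b div 165) + 37" using b r_def by simp
    then show ?thesis using inst_s11_37[of "b div 165"] by metis
  next
    assume "r = 73" then have "b = 165 * (b div 165) + 73" using b r_def by simp
    then show ?thesis using inst_s11_73[of "b div 165"] by metis
  next
    assume "r = 74" then have "b = 165 * (b div 165) + 74" using b r_def by simp
    then show ?thesis using inst_s11_74[of "b div 165"] by metis
  next
    assume "r = 91" then have "b = 165 * (b div 165) + 91" using b r_def by simp
    then show ?thesis using inst_s11_91[of "b div 165"] by metis
  next
    assume "r = 92" then have "b = 165 * (b div 165) + 92" using b r_def by simp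
    then show ?thesis using inst_s11_92[of "b div 165"] by metis
  next
    assume "r = 128" then have "b = 165 * (b div 165) + 128" using b r_def by simp
    then show ?thesis using inst_s11_128[of "b div 165"] by metis
  next
    assume "r = 129" then have "b = 165 * (b div 165) + 129" using b r_def by simp
    then show ?thesis using inst_s11_129[of "b div 165"] by metis
  next
    assume "r = 146" then have "b = 165 * (b div 165) + 146" using b r_def by simp
    then show ?thesis using inst_s11_146[of "b div 165"] by metis
  next
    assume "r = 147" then have "b = 165 * (b div 165) + 147" using b r_def by simp
    then show ?thesis using inst_s11_147[of "b div 165"] by metis
  qed
qed

end
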